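(* Let $\mathcal H$ be a complex Hilbert space and $T\in\mathcal B(\mathcal H)$ left-invertible, with Cauchy dual $T'=T(T^*T)^{-1}$. The following are equivalent: (i) $\|T'T^*x\|\le\|T'Tx\|$ for all $x\in\mathcal H$; (ii) $T(T^*T)^{-1}T^*\le T^*(T^*T)^{-1}T$; (iii) $P_{\mathcal R(T)}\le T^*(T^*T)^{-1}T$; (iv) the restriction of $T'$ to its range $\mathcal R(T')$ is hyponormal. In particular, every concave operator is weakly concave.
   Context: $P_{\mathcal M}$ is the orthogonal projection onto a closed subspace $\mathcal M$; $\mathcal R(\cdot)$ is the range. An operator $A$ is hyponormal if $A^*A-AA^*\ge0$. $T$ is concave if $I-2T^*T+T^{*2}T^2\le0$. A left-invertible $T$ is weakly concave if $\sigma_{ap}(T)\subseteq\partial\mathbb D$ (approximate point spectrum in the unit circle), $\|x\|\le\|Tx\|$ for all $x$, and $\|T'T^*x\|\le\|T'Tx\|$ for all $x$. *)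

theory Defs
  imports "HOL-Analysis.Analysis"
begin

text \<open>A complex Hilbert space: a real Banach space carrying a compatible complex
  scalar multiplication and a complex inner product (linear in the first argument,
  conjugate-symmetric, positive definite) inducing the norm.\<close>

class chilbert = banach +
  fixes scaleC :: "complex \<Rightarrow> 'a \<Rightarrow> 'a"
    and cinner :: "'a \<Rightarrow> 'a \<Rightarrow> complex"
  assumes scaleC_add_right: "scaleC a (x + y) = scaleC a x + scaleC a y"
    and scaleC_add_left: "scaleC (a + b) x = scaleC a x + scaleC b x"
    and scaleC_scaleC: "scaleC a (scaleC b x) = scaleC (a * b) x"
    and scaleC_one: "scaleC 1 x = x"
    and scaleR_scaleC: "scaleR r x = scaleC (complex_of_real r) x"
    and cinner_add_left: "cinner (x + y) z = cinner x z + cinner y z"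
    and cinner_scaleC_left: "cinner (scaleC a x) y = a * cinner x y"
    and cinner_commute: "cinner y x = cnj (cinner x y)"
    and cinner_ge_zero: "0 \<le> Re (cinner x x)"
    and cinner_eq_zero_iff: "cinner x x = 0 \<longleftrightarrow> x = 0"
    and norm_eq_sqrt_cinner: "norm x = sqrt (Re (cinner x x))"

definition cblinear :: "('a::chilbert \<Rightarrow> 'a) \<Rightarrow> bool" where
  "cblinear T \<longleftrightarrow> bounded_linear T \<and> (\<forall>a x. T (scaleC a x) = scaleC a (T x))"

definition adj :: "('a::chilbert \<Rightarrow> 'a) \<Rightarrow> 'a \<Rightarrow> 'a" where
  "adj T y = (THE z. \<forall>x. cinner (T x) y = cinner x z)"

definition positive_op :: "('a::chilbert \<Rightarrow> 'a) \<Rightarrow> bool" where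
  "positive_op A \<longleftrightarrow> (\<forall>x. Im (cinner (A x) x) = 0 \<and> 0 \<le> Re (cinner (A x) x))"

definition op_le :: "('a::chilbert \<Rightarrow> 'a) \<Rightarrow> ('a \<Rightarrow> 'a) \<Rightarrow> bool" where
  "op_le A B \<longleftrightarrow> positive_op (\<lambda>x. B x - A x)"

definition left_invertible :: "('a::chilbert \<Rightarrow> 'a) \<Rightarrow> bool" where
  "left_invertible T \<longleftrightarrow> cblinear T \<and> (\<exists>S. cblinear S \<and> (\<forall>x. S (T x) = x))"

text \<open>Cauchy dual \<open>T' = T (T*T)\<^sup>-\<^sup>1\<close> (for left-invertible \<open>T\<close>, \<open>T*T\<close> is bijective).\<close>
definition cauchy_dual :: "('a::chilbert \<Rightarrow> 'a) \<Rightarrow> 'a \<Rightarrow> 'a" where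
  "cauchy_dual T = T \<circ> inv (adj T \<circ> T)"

definition proj_onto :: "'a::chilbert set \<Rightarrow> 'a \<Rightarrow> 'a" where
  "proj_onto M x = (THE y. y \<in> M \<and> (\<forall>m\<in>M. cinner (x - y) m = 0))"

definition adj_on :: "'a::chilbert set \<Rightarrow> ('a \<Rightarrow> 'a) \<Rightarrow> 'a \<Rightarrow> 'a" where
  "adj_on M A y = (THE z. z \<in> M \<and> (\<forall>x\<in>M. cinner (A x) y = cinner x z))"

definition hyponormal_on :: "'a::chilbert set \<Rightarrow> ('a \<Rightarrow> 'a) \<Rightarrow> bool" where
  "hyponormal_on M A \<longleftrightarrow> A ` M \<subseteq> M \<and>
     (\<forall>x\<in>M. let c = cinner (adj_on M A (A x)) x - cinner (A (adj_on M A x)) x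
             in Im c = 0 \<and> 0 \<le> Re c)"

definition concave_op :: "('a::chilbert \<Rightarrow> 'a) \<Rightarrow> bool" where
  "concave_op T \<longleftrightarrow> cblinear T \<and>
     op_le (\<lambda>x. x - scaleC 2 (adj T (T x)) + adj T (adj T (T (T x)))) (\<lambda>x. 0)"

definition ap_spectrum :: "('a::chilbert \<Rightarrow> 'a) \<Rightarrow> complex set" where
  "ap_spectrum T = {l. \<forall>e>0. \<exists>x. norm x = 1 \<and> norm (T x - scaleC l x) < e}"

definition weakly_concave :: "('a::chilbert \<Rightarrow> 'a) \<Rightarrow> bool" where
  "weakly_concave T \<longleftrightarrow> left_invertible T \<and> ap_spectrum T \<subseteq> sphere 0 1 \<and>
     (\<forall>x. norm x \<le> norm (T x)) \<and>
     (\<forall>x. norm (cauchy_dual T (adj T x)) \<le> norm (cauchy_dual T (T x)))"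

end

theory Submission imports Defs begin

lemma cinner_zero_left[simp]: "cinner 0 y = 0"
proof -
  have "cinner (0+0) y = cinner 0 y + cinner 0 y" by (rule cinner_add_left)
  then show ?thesis by simp
qed

lemma cinner_minus_left: "cinner (- x) y = - cinner x y"
proof -
  have "cinner (x + - x) y = cinner x y + cinner (-x) y" by (rule cinner_add_left)
  then show ?thesis by (simp add: eq_neg_iff_add_eq_0 add.commute)
qed

lemma cinner_diff_left: "cinner (x - y) z = cinner x z - cinner y z"
  using cinner_add_left[of x "-y" z] by (simp add: cinner_minus_left)

lemma cinner_add_right: "cinner x (y + z) = cinner x y + cinner x z"
  by (metis cinner_commute cinner_add_left complex_cnj_add)

lemma cinner_diff_right: "cinner x (y - z) = cinner x y - cinner x z"
  by (metis cinner_commute cinner_diff_left complex_cnj_diff)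

lemma cinner_zero_right[simp]: "cinner x 0 = 0"
  by (metis cinner_commute cinner_zero_left complex_cnj_zero)

lemma cinner_scaleC_right: "cinner x (scaleC a y) = cnj a * cinner x y"
  by (metis cinner_commute cinner_scaleC_left complex_cnj_mult complex_cnj_cnj)

lemma cinner_self: "cinner x x = complex_of_real ((norm x)\<^sup>2)"
proof -
  have "Im (cinner x x) = 0" using cinner_commute[of x x]
    by (metis Im_complex_div_lemma add.inverse_neutral complex_cnj_add complex_cnj_cnj complex_cnj_one_iff complex_mod_cnj complex_mod_mult_cnj complex_cnj_complex_of_real mult_1 neg_equal_zero cnj.sel(2))
  moreover have "Re (cinner x x) = (norm x)^2"
    using cinner_ge_zero[of x] norm_eq_sqrt_cinner[of x] by simp
  ultimately show ?thesis by (simp add: complex_eq_iff)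
qed

lemma scaleC_zero_left[simp]: "scaleC 0 x = 0"
  using scaleR_scaleC[of 0 x] by simp

lemma scaleC_zero_right[simp]: "scaleC a 0 = 0"
proof -
  have "scaleC a (0+0) = scaleC a 0 + scaleC a 0" by (rule scaleC_add_right)
  then show ?thesis by simp
qed

lemma scaleC_minus_right: "scaleC a (- x) = - scaleC a x"
proof -
  have "scaleC a (x + - x) = scaleC a x + scaleC a (-x)" by (rule scaleC_add_right)
  then show ?thesis by (simp add: eq_neg_iff_add_eq_0 add.commute)
qed

lemma scaleC_diff_right: "scaleC a (x - y) = scaleC a x - scaleC a y"
  using scaleC_add_right[of a x "-y"] by (simp add: scaleC_minus_right)

lemma scaleC_minus_left: "scaleC (- a) x = - scaleC a x"
proof -
  have "scaleC (a + - a) x = scaleC a x + scaleC (-a) x" by (rule scaleC_add_left)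
  then show ?thesis by (simp add: eq_neg_iff_add_eq_0 add.commute)
qed

lemma scaleC_diff_left: "scaleC (a - b) x = scaleC a x - scaleC b x"
  using scaleC_add_left[of a "-b" x] by (simp add: scaleC_minus_left)

lemma scaleC_of_real: "scaleC (complex_of_real r) x = scaleR r x"
  by (simp add: scaleR_scaleC)

lemma cinner_real: "cinner x x = complex_of_real (Re (cinner x x))"
  by (simp add: cinner_self)

lemma norm_scaleC: "norm (scaleC a x) = cmod a * norm x"
proof -
  have 1: "cinner (scaleC a x) (scaleC a x) = (a * cnj a) * cinner x x"
    by (simp add: cinner_scaleC_left cinner_scaleC_right mult.assoc)
  have "complex_of_real ((norm (scaleC a x))^2) = complex_of_real ((cmod a)^2 * (norm x)^2)"
    using 1 by (simp only: cinner_self complex_norm_square[symmetric] of_real_mult)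
  then have "(norm (scaleC a x))^2 = (cmod a * norm x)^2"
    by (simp only: of_real_eq_iff power_mult_distrib)
  then show ?thesis by (simp add: power2_eq_iff_nonneg)
qed

lemma cinner_eq_zero_self: "cinner x x = 0 \<Longrightarrow> x = 0"
  using cinner_eq_zero_iff by blast

lemma cinner_ext: assumes "\<And>x. cinner x z1 = cinner x z2" shows "z1 = z2"
proof -
  have "cinner (z1 - z2) (z1 - z2) = 0" using assms[of "z1 - z2"] by (simp add: cinner_diff_right)
  then show ?thesis by (simp add: cinner_eq_zero_iff)
qed

lemma cinner_expand: "cinner (x + scaleC t y) (x + scaleC t y) =
   cinner x x + t * cinner y x + cnj t * cinner x y + t * cnj t * cinner y y"
  by (simp add: cinner_add_left cinner_add_right cinner_scaleC_left cinner_scaleC_right algebra_simps)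

lemma cinner_expand_diff: "cinner (x - y) (x - y) = cinner x x - cinner x y - cinner y x + cinner y y"
  by (simp add: cinner_diff_left cinner_diff_right algebra_simps)

lemma Re_cinner_commute: "Re (cinner y x) = Re (cinner x y)"
  by (metis cinner_commute cnj.sel(1))

lemma norm_diff_sq: "(norm (x - y))^2 = (norm x)^2 + (norm y)^2 - 2 * Re (cinner x y)"
proof -
  have "complex_of_real ((norm (x - y))^2) = cinner x x - cinner x y - cinner y x + cinner y y"
    by (metis cinner_self cinner_expand_diff)
  then have "(norm (x - y))^2 = Re (cinner x x - cinner x y - cinner y x + cinner y y)"
    by (metis Re_complex_of_real)
  moreover have "Re (cinner y x) = Re (cinner x y)" by (rule Re_cinner_commute)
  ultimately show ?thesis by (simp add: cinner_self)
qed

lemma norm_add_sq: "(norm (x + y))^2 = (norm x)^2 + (norm y)^2 + 2 * Re (cinner x y)"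
  using norm_diff_sq[of x "-y"] Re_cinner_commute[of x y] by (simp add: cinner_minus_left Re_cinner_commute[of x "-y"])

lemma parallelogram: fixes x y :: "'a::chilbert" shows "(norm (x + y))^2 + (norm (x - y))^2 = 2 * (norm x)^2 + 2 * (norm y)^2"
  using norm_add_sq[of x y] norm_diff_sq[of x y] by simp

lemma cauchy_schwarz: "cmod (cinner x y) \<le> norm x * norm y"
proof (cases "y = 0")
  case True then show ?thesis by simp
next
  case False
  define a where "a = cinner x y"
  define r where "r = (norm y)^2"
  have r: "r > 0" using False by (simp add: r_def)
  define t where "t = - a / complex_of_real r"
  have "0 \<le> Re (cinner (x + scaleC t y) (x + scaleC t y))" by (rule cinner_ge_zero)
  also have "cinner (x + scaleC t y) (x + scaleC t y) = cinner x x + t * cnj a + cnj t * a + t * cnj t * complex_of_real r"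
    unfolding cinner_expand a_def r_def by (simp add: cinner_self cinner_commute[of y x])
  finally have 1: "0 \<le> Re (cinner x x + t * cnj a + cnj t * a + t * cnj t * complex_of_real r)" .
  have aa: "a * cnj a = complex_of_real ((cmod a)^2)" by (rule complex_norm_square[symmetric])
  have e1: "t * cnj a = complex_of_real (-((cmod a)^2) / r)" unfolding t_def
    by (simp only: times_divide_eq_left mult_minus_left aa of_real_divide of_real_minus)
  have e2: "cnj t * a = complex_of_real (-((cmod a)^2) / r)" unfolding t_def
    by (simp only: complex_cnj_divide complex_cnj_minus complex_cnj_complex_of_real times_divide_eq_left mult_minus_left mult.commute[of "cnj a"] aa of_real_divide of_real_minus)
  have "t * cnj t * complex_of_real r = (a * cnj a) / complex_of_real r" unfolding t_def using r
    by (simp add: field_simps)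
  then have e3: "t * cnj t * complex_of_real r = complex_of_real ((cmod a)^2 / r)"
    by (simp only: aa of_real_divide)
  have "0 \<le> (norm x)^2 -((cmod a)^2) / r" using 1 unfolding e1 e2 e3 by (simp add: cinner_self)
  then have "(cmod a)^2 / r \<le> (norm x)^2" by simp
  then have "(cmod a)^2 \<le> (norm x)^2 * (norm y)^2" using r by (simp add: r_def field_simps)
  then have "(cmod a)^2 \<le> (norm x * norm y)^2" by (simp add: power_mult_distrib)
  then show ?thesis unfolding a_def by (simp add: abs_le_square_iff power2_le_iff_abs_le)
qed


lemma orth_from_min:
  assumes min: "\<And>t. norm w \<le> norm (w + scaleC t m)"
  shows "cinner w m = 0"
proof (cases "m = 0")
  case True then show ?thesis by simp
next
  case False
  define a where "a = cinner w m"
  define r where "r = (norm m)^2"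
  have r: "r > 0" using False by (simp add: r_def)
  define t where "t = - a / complex_of_real r"
  have aa: "a * cnj a = complex_of_real ((cmod a)^2)" by (rule complex_norm_square[symmetric])
  have e1: "t * cnj a = complex_of_real (-((cmod a)^2) / r)" unfolding t_def
    by (simp only: times_divide_eq_left mult_minus_left aa of_real_divide of_real_minus)
  have e2: "cnj t * a = complex_of_real (-((cmod a)^2) / r)" unfolding t_def
    by (simp only: complex_cnj_divide complex_cnj_minus complex_cnj_complex_of_real times_divide_eq_left mult_minus_left mult.commute[of "cnj a"] aa of_real_divide of_real_minus)
  have "t * cnj t * complex_of_real r = (a * cnj a) / complex_of_real r" unfolding t_def using r
    by (simp add: field_simps)
  then have e3: "t * cnj t * complex_of_real r = complex_of_real ((cmod a)^2 / r)"
    by (simp only: aa of_real_divide)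
  have "cinner (w + scaleC t m) (w + scaleC t m) = cinner w w + t * cnj a + cnj t * a + t * cnj t * complex_of_real r"
    unfolding cinner_expand a_def r_def by (simp add: cinner_self cinner_commute[of m w])
  then have "(norm (w + scaleC t m))^2 = (norm w)^2 - (cmod a)^2 / r"
    unfolding e1 e2 e3 cinner_self by (simp only: of_real_add[symmetric] of_real_eq_iff)
  moreover have "(norm w)^2 \<le> (norm (w + scaleC t m))^2" using min[of t] by (simp add: power_mono)
  ultimately have "(cmod a)^2 / r \<le> 0" by simp
  then have "(cmod a)^2 \<le> 0" using r by (simp add: divide_le_0_iff)
  then show ?thesis unfolding a_def by simp
qed

lemma min_norm_exists:
  fixes C :: "'a::chilbert set"
  assumes cl: "closed C" and ne: "C \<noteq> {}"
    and mid: "\<And>x y. x \<in> C \<Longrightarrow> y \<in> C \<Longrightarrow> scaleR (1/2) (x + y) \<in> C"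
  shows "\<exists>w\<in>C. \<forall>x\<in>C. norm w \<le> norm x"
proof -
  define d where "d = Inf ((\<lambda>x. (norm x)^2) ` C)"
  have bdd: "bdd_below ((\<lambda>x. (norm x)^2) ` C)" by (rule bdd_belowI[where m=0]) auto
  have low: "d \<le> (norm x)^2" if "x \<in> C" for x
    unfolding d_def using bdd that by (simp add: cInf_lower)
  have "\<exists>x\<in>C. (norm x)^2 < d + inverse (real (Suc n))" for n
  proof -
    have "Inf ((\<lambda>x. (norm x)^2) ` C) < d + inverse (real (Suc n))" unfolding d_def by simp
    from cInf_lessD[OF _ this] ne show ?thesis by auto
  qed
  then obtain X where X: "\<And>n. X n \<in> C" "\<And>n. (norm (X n))^2 < d + inverse (real (Suc n))"
    by metis
  have key: "(norm (X m - X n))^2 \<le> 2 * inverse (real (Suc m)) + 2 * inverse (real (Suc n))" for m n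
  proof -
    have "d \<le> (norm (scaleR (1/2) (X m + X n)))^2" by (rule low[OF mid[OF X(1)[of m] X(1)[of n]]])
    also have "(norm (scaleR (1/2) (X m + X n)))^2 = (norm (X m + X n))^2 / 4"
      by (simp add: power2_eq_square)
    finally have "4 * d \<le> (norm (X m + X n))^2" by simp
    moreover have "(norm (X m + X n))^2 + (norm (X m - X n))^2 = 2 * (norm (X m))^2 + 2 * (norm (X n))^2"
      by (rule parallelogram)
    ultimately show ?thesis using X(2)[of m] X(2)[of n] by linarith
  qed
  have "Cauchy X"
  proof (rule CauchyI)
    fix e :: real assume e: "0 < e"
    then have "0 < e^2 / 4" by simp
    from reals_Archimedean[OF this] obtain M where M: "inverse (real (Suc M)) < e^2 / 4" by auto
    have "\<forall>m\<ge>M. \<forall>n\<ge>M. norm (X m - X n) < e"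
    proof (intro allI impI)
      fix m n assume mn: "M \<le> m" "M \<le> n"
      have i1: "inverse (real (Suc m)) \<le> inverse (real (Suc M))" using mn by (simp add: le_imp_inverse_le)
      have i2: "inverse (real (Suc n)) \<le> inverse (real (Suc M))" using mn by (simp add: le_imp_inverse_le)
      have sq: "(norm (X m - X n))^2 < e^2" using key[of m n] i1 i2 M by linarith
      have "0 \<le> e" using e by simp
      from power2_less_imp_less[OF sq this] show "norm (X m - X n) < e" .
    qed
    then show "\<exists>M. \<forall>m\<ge>M. \<forall>n\<ge>M. norm (X m - X n) < e" by blast
  qed
  then obtain w where w: "X \<longlonglongrightarrow> w" using Cauchy_convergent convergent_def by blast
  have wC: "w \<in> C" using closed_sequentially[OF cl X(1) w] .
  have "(\<lambda>n. (norm (X n))^2) \<longlonglongrightarrow> (norm w)^2" by (intro tendsto_intros w)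
  moreover have "(\<lambda>n. d + inverse (real (Suc n))) \<longlonglongrightarrow> d + 0"
    by (intro tendsto_intros LIMSEQ_inverse_real_of_nat)
  ultimately have "(norm w)^2 \<le> d + 0" using X(2) by (intro LIMSEQ_le) (auto intro: less_imp_le)
  then have "\<forall>x\<in>C. norm w \<le> norm x"
  proof (intro ballI)
    fix x assume "x \<in> C"
    then have "(norm w)^2 \<le> (norm x)^2" using low[of x] \<open>(norm w)^2 \<le> d + 0\<close> by linarith
    from power2_le_imp_le[OF this norm_ge_zero] show "norm w \<le> norm x" .
  qed
  then show ?thesis using wC by (intro bexI)
qed

lemma proj_exists:
  fixes M :: "'a::chilbert set"
  assumes cl: "closed M" and z: "0 \<in> M" and add: "\<And>x y. x \<in> M \<Longrightarrow> y \<in> M \<Longrightarrow> x + y \<in> M"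
    and sc: "\<And>a x. x \<in> M \<Longrightarrow> scaleC a x \<in> M"
  shows "\<exists>p\<in>M. \<forall>m\<in>M. cinner (v - p) m = 0"
proof -
  define C where "C = (\<lambda>m. v - m) ` M"
  have "C = (+) v ` ((\<lambda>x. - x) ` M)" unfolding C_def image_image by simp
  then have clC: "closed C" using closed_translation closed_negations cl by metis
  have neC: "C \<noteq> {}" using z unfolding C_def by auto
  have midC: "scaleR (1/2) (x + y) \<in> C" if xyC: "x \<in> C" "y \<in> C" for x y
  proof -
    obtain m1 m2 where m: "m1 \<in> M" "m2 \<in> M" "x = v - m1" "y = v - m2" using xyC unfolding C_def by blast
    have "scaleR (1/2) (x + y) = v - scaleC (complex_of_real (1/2)) (m1 + m2)"
    proof -
      have h: "(1/2) *\<^sub>R v + (1/2) *\<^sub>R v = v" by (simp add: scaleR_add_left[symmetric])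
      show ?thesis unfolding m scaleC_of_real using h by (simp add: algebra_simps)
    qed
    moreover have "scaleC (complex_of_real (1/2)) (m1 + m2) \<in> M" using m add sc by blast
    ultimately show ?thesis unfolding C_def by blast
  qed
  obtain w where w: "w \<in> C" "\<And>x. x \<in> C \<Longrightarrow> norm w \<le> norm x"
    using min_norm_exists[OF clC neC midC] by blast
  then obtain p where p: "p \<in> M" "w = v - p" unfolding C_def by auto
  have "cinner w m = 0" if m: "m \<in> M" for m
  proof (rule orth_from_min)
    fix t
    have "p + scaleC (- t) m \<in> M" using add sc p m by blast
    moreover have "w + scaleC t m = v - (p + scaleC (- t) m)" unfolding p by (simp add: scaleC_minus_left)
    ultimately show "norm w \<le> norm (w + scaleC t m)" using w(2) unfolding C_def by (metis image_eqI)
  qed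
  then show ?thesis using p by blast
qed

lemma riesz:
  fixes f :: "'a::chilbert \<Rightarrow> complex"
  assumes bl: "bounded_linear f" and hom: "\<And>a x. f (scaleC a x) = a * f x"
  shows "\<exists>z. \<forall>x. f x = cinner x z"
proof (cases "\<forall>x. f x = 0")
  case True then show ?thesis by (intro exI[of _ 0]) simp
next
  case False
  then obtain x0 where x0: "f x0 \<noteq> 0" by blast
  define x1 where "x1 = scaleC (inverse (f x0)) x0"
  have fx1: "f x1 = 1" using x0 unfolding x1_def hom by simp
  define N where "N = {x. f x = 0}"
  have clN: "closed N" unfolding N_def
    by (rule closed_Collect_eq) (auto intro: linear_continuous_on bl continuous_on_const)
  have f0: "f 0 = 0" using linear_simps[OF bl] by simp
  have fadd: "f (x + y) = f x + f y" for x y using linear_simps[OF bl] by simp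
  have fdiff: "f (x - y) = f x - f y" for x y using linear_simps[OF bl] by simp
  obtain p where p: "p \<in> N" "\<And>m. m \<in> N \<Longrightarrow> cinner (x1 - p) m = 0"
    using proj_exists[OF clN, of x1] f0 fadd hom unfolding N_def by auto
  define w where "w = x1 - p"
  have fw: "f w = 1" unfolding w_def fdiff fx1 using p(1) unfolding N_def by simp
  have wne: "cinner w w \<noteq> 0"
  proof
    assume "cinner w w = 0"
    then have "w = 0" by (simp add: cinner_eq_zero_iff)
    then show False using fw f0 by simp
  qed
  have "f x = cinner x (scaleC (cnj (inverse (cinner w w))) w)" for x
  proof -
    define m where "m = x - scaleC (f x) w"
    have "m \<in> N" unfolding N_def m_def by (simp add: fdiff hom fw)
    then have "cinner w m = 0" using p(2) unfolding w_def by blast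
    then have "cinner m w = 0" using cinner_commute[of w m] by simp
    then have "cinner x w = f x * cinner w w" unfolding m_def cinner_diff_left cinner_scaleC_left by simp
    then show ?thesis using wne by (simp add: cinner_scaleC_right)
  qed
  then show ?thesis by blast
qed


lemma bl_cinner_left: "bounded_linear (\<lambda>x. cinner x y)"
proof (rule bounded_linear_intro[where K="norm y"])
  show "cinner (x + z) y = cinner x y + cinner z y" for x z by (rule cinner_add_left)
  show "cinner (r *\<^sub>R x) y = r *\<^sub>R cinner x y" for r x
    by (simp only: scaleR_scaleC cinner_scaleC_left scaleR_conv_of_real)
  show "norm (cinner x y) \<le> norm x * norm y" for x using cauchy_schwarz[of x y] by simp
qed

lemma cblinear_simps:
  assumes "cblinear T"
  shows "T (a + b) = T a + T b" "T (a - b) = T a - T b" "T 0 = 0" "T (- a) = - T a"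
    "T (scaleC c a) = scaleC c (T a)"
  using assms linear_simps[of T] unfolding cblinear_def by auto

lemma cblinear_bl: "cblinear T \<Longrightarrow> bounded_linear T" unfolding cblinear_def by simp

lemma cblinear_comp: "cblinear A \<Longrightarrow> cblinear B \<Longrightarrow> cblinear (A \<circ> B)"
  unfolding cblinear_def comp_def by (auto intro: bounded_linear_compose)

lemma adj_prop:
  assumes T: "cblinear T"
  shows "cinner (T x) y = cinner x (adj T y)"
proof -
  have bl: "bounded_linear (\<lambda>x. cinner (T x) y)"
    using bounded_linear_compose[OF bl_cinner_left cblinear_bl[OF T]] by simp
  have hom: "cinner (T (scaleC a x)) y = a * cinner (T x) y" for a x
    using cblinear_simps[OF T] by (simp add: cinner_scaleC_left)
  obtain z where z: "\<forall>x. cinner (T x) y = cinner x z" using riesz[OF bl hom] by blast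
  have "adj T y = z" unfolding adj_def
  proof (rule the_equality)
    show "\<forall>x. cinner (T x) y = cinner x z" by (rule z)
    fix z' assume "\<forall>x. cinner (T x) y = cinner x z'"
    then show "z' = z" using z by (intro cinner_ext) metis
  qed
  then show ?thesis using z by simp
qed

lemma adj_left:
  assumes T: "cblinear T"
  shows "cinner (adj T y) x = cinner y (T x)"
  using adj_prop[OF T, of x y] by (metis cinner_commute)

lemma adj_cblinear:
  assumes T: "cblinear T"
  shows "cblinear (adj T)"
proof -
  have add: "adj T (y1 + y2) = adj T y1 + adj T y2" for y1 y2
    by (rule cinner_ext) (simp add: adj_prop[OF T, symmetric] cinner_add_right)
  have sc: "adj T (scaleC a y) = scaleC a (adj T y)" for a y
    by (rule cinner_ext) (simp add: adj_prop[OF T, symmetric] cinner_scaleC_right)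
  obtain K where K: "K > 0" "\<And>x. norm (T x) \<le> norm x * K"
    using bounded_linear.pos_bounded[OF cblinear_bl[OF T]] by blast
  have bnd: "norm (adj T y) \<le> norm y * K" for y
  proof (cases "norm (adj T y) = 0")
    case True then show ?thesis using K by simp
  next
    case False
    then have pos: "norm (adj T y) > 0" by simp
    have "(norm (adj T y))^2 = Re (cinner (adj T y) (adj T y))" by (simp only: cinner_self Re_complex_of_real)
    also have "\<dots> = Re (cinner y (T (adj T y)))" by (simp only: adj_left[OF T])
    also have "\<dots> \<le> cmod (cinner y (T (adj T y)))" by (rule complex_Re_le_cmod)
    also have "\<dots> \<le> norm y * norm (T (adj T y))" by (rule cauchy_schwarz)
    also have "\<dots> \<le> norm y * (norm (adj T y) * K)" using K(2)[of "adj T y"] by (intro mult_left_mono) auto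
    finally have "norm (adj T y) * norm (adj T y) \<le> (norm y * K) * norm (adj T y)"
      by (simp only: power2_eq_square ac_simps)
    then show ?thesis using pos by (metis mult_le_cancel_right_pos)
  qed
  have "bounded_linear (adj T)"
    by (rule bounded_linear_intro[where K=K]) (auto simp: add sc scaleR_scaleC bnd)
  then show ?thesis unfolding cblinear_def using sc by simp
qed

locale bb =
  fixes T :: "'a::chilbert \<Rightarrow> 'a" and K :: real
  assumes cbl: "cblinear T" and Kpos: "K > 0" and below: "\<And>x. norm x \<le> K * norm (T x)"
begin

definition B where "B = adj T \<circ> T"

lemma B_inner: "cinner (B x) y = cinner (T x) (T y)"
  unfolding B_def by (simp add: adj_left[OF cbl])

lemma B_sa: "cinner (B x) y = cinner x (B y)"
  unfolding B_def by (simp add: adj_left[OF cbl] adj_prop[OF cbl])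

lemma B_cbl: "cblinear B"
  unfolding B_def by (rule cblinear_comp[OF adj_cblinear[OF cbl] cbl])

lemma T_zero: "T x = 0 \<Longrightarrow> x = 0"
  using below[of x] by simp

lemma B_below: "norm x \<le> K^2 * norm (B x)"
proof (cases "norm x = 0")
  case True then show ?thesis using Kpos by simp
next
  case False
  then have pos: "norm x > 0" by simp
  have "(norm x)^2 \<le> (K * norm (T x))^2" using below[of x] by (simp add: power_mono)
  also have "\<dots> = K^2 * Re (cinner (B x) x)" by (simp add: B_inner cinner_self power_mult_distrib)
  also have "\<dots> \<le> K^2 * cmod (cinner (B x) x)" by (simp add: complex_Re_le_cmod mult_left_mono)
  also have "\<dots> \<le> K^2 * (norm (B x) * norm x)" by (simp add: cauchy_schwarz mult_left_mono)
  finally have "norm x * norm x \<le> (K^2 * norm (B x)) * norm x" by (simp only: power2_eq_square ac_simps)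
  then show ?thesis using pos by (metis mult_le_cancel_right_pos)
qed

lemma B_closed: "closed (range B)"
proof -
  have "complete (B ` UNIV)"
  proof (rule complete_isometric_image[where e="1 / K^2"])
    show "0 < 1 / K^2" using Kpos by simp
    show "subspace UNIV" by (rule subspace_UNIV)
    show "bounded_linear B" by (rule cblinear_bl[OF B_cbl])
    show "\<forall>x\<in>UNIV. 1 / K\<^sup>2 * norm x \<le> norm (B x)"
    proof
      fix x
      have k: "K^2 > 0" using Kpos by simp
      have "norm x \<le> norm (B x) * K^2" using B_below[of x] by (simp only: mult.commute)
      then have "norm x / K^2 \<le> norm (B x)" by (simp only: pos_divide_le_eq[OF k])
      then show "1 / K\<^sup>2 * norm x \<le> norm (B x)" by simp
    qed
    show "complete (UNIV :: 'a set)" by (rule complete_UNIV)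
  qed
  then show ?thesis by (rule complete_imp_closed)
qed

lemma B_surj: "surj B"
proof -
  note Bs = cblinear_simps[OF B_cbl]
  have "v \<in> range B" for v
  proof -
    have z: "0 \<in> range B" using rangeI[of B 0] by (simp only: Bs(3))
    have a: "x + y \<in> range B" if xy: "x \<in> range B" "y \<in> range B" for x y
    proof -
      obtain u w where "x = B u" "y = B w" using xy by blast
      then have "x + y = B (u + w)" by (simp only: Bs(1))
      then show ?thesis by simp
    qed
    have c: "scaleC a x \<in> range B" if xr: "x \<in> range B" for a x
    proof -
      obtain u where "x = B u" using xr by blast
      then have "scaleC a x = B (scaleC a u)" by (simp only: Bs(5))
      then show ?thesis by simp
    qed
    obtain p where p: "p \<in> range B" "\<forall>m\<in>range B. cinner (v - p) m = 0"
      using proj_exists[OF B_closed z a c, of v] by blast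
    then have "cinner (v - p) (B (v - p)) = 0" by (simp add: rangeI)
    then have "cinner (B (v - p)) (v - p) = 0" using cinner_commute[of "B (v - p)" "v - p"] by simp
    then have "cinner (T (v - p)) (T (v - p)) = 0" by (simp add: B_inner)
    then have "T (v - p) = 0" by (simp add: cinner_eq_zero_iff)
    then have "v = p" using T_zero[of "v - p"] by simp
    then show ?thesis using p by simp
  qed
  then show ?thesis by auto
qed

lemma B_inj: "inj B"
proof (rule injI)
  fix x y assume "B x = B y"
  then have "B (x - y) = 0" using cblinear_simps[OF B_cbl] by simp
  then have "norm (x - y) \<le> 0" using B_below[of "x - y"] by simp
  then show "x = y" by simp
qed

definition Bi where "Bi = inv B"

lemma B_Bi[simp]: "B (Bi y) = y" unfolding Bi_def using B_surj by (simp add: surj_f_inv_f)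
lemma Bi_B[simp]: "Bi (B x) = x" unfolding Bi_def using B_inj by simp

lemma Bi_sa: "cinner (Bi x) y = cinner x (Bi y)"
proof -
  have "cinner (Bi x) y = cinner (Bi x) (B (Bi y))" by simp
  also have "\<dots> = cinner (B (Bi x)) (Bi y)" by (simp only: B_sa)
  finally show ?thesis by simp
qed

lemma Bi_eqI: "B x = B y \<Longrightarrow> x = y" using B_inj by (simp add: inj_eq)

lemma Bi_cbl: "cblinear Bi"
proof -
  note Bs = cblinear_simps[OF B_cbl]
  have add: "Bi (x + y) = Bi x + Bi y" for x y by (rule Bi_eqI) (simp add: Bs)
  have sc: "Bi (scaleC a x) = scaleC a (Bi x)" for a x by (rule Bi_eqI) (simp add: Bs)
  have bnd: "norm (Bi x) \<le> norm x * K^2" for x using B_below[of "Bi x"] by (simp add: mult.commute)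
  have "bounded_linear Bi"
    by (rule bounded_linear_intro[where K="K^2"]) (auto simp: add sc scaleR_scaleC bnd)
  then show ?thesis unfolding cblinear_def using sc by simp
qed

lemma invB: "inv (adj T \<circ> T) = Bi" unfolding Bi_def B_def ..

lemma adjT_T: "adj T (T u) = B u" unfolding B_def by simp

definition P where "P = T \<circ> Bi \<circ> adj T"

lemma P_T: "P (T u) = T u" unfolding P_def by (simp add: adjT_T)

lemma P_range: "P x \<in> range T" unfolding P_def by simp

lemma range_diff: "a \<in> range T \<Longrightarrow> b \<in> range T \<Longrightarrow> a - b \<in> range T"
proof -
  assume "a \<in> range T" "b \<in> range T"
  then obtain u w where "a = T u" "b = T w" by blast
  then have "a - b = T (u - w)" by (simp only: cblinear_simps[OF cbl])
  then show ?thesis by simp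
qed

lemma P_orth: "cinner (x - P x) (T m) = 0"
proof -
  have "cinner (P x) (T m) = cinner (T (Bi (adj T x))) (T m)" unfolding P_def by simp
  also have "\<dots> = cinner (B (Bi (adj T x))) m" by (simp only: B_inner)
  also have "\<dots> = cinner x (T m)" by (simp add: adj_left[OF cbl])
  finally show ?thesis by (simp add: cinner_diff_left)
qed

lemma P_orth': "y \<in> range T \<Longrightarrow> cinner (x - P x) y = 0"
  using P_orth by blast

lemma proj_eq: "proj_onto (range T) x = P x"
  unfolding proj_onto_def
proof (rule the_equality)
  show "P x \<in> range T \<and> (\<forall>m\<in>range T. cinner (x - P x) m = 0)" using P_range P_orth' by blast
  fix y assume y: "y \<in> range T \<and> (\<forall>m\<in>range T. cinner (x - y) m = 0)"
  define d where "d = P x - y"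
  have d: "d \<in> range T" unfolding d_def using range_diff P_range y by blast
  have "cinner (x - y) d = 0" using y d by blast
  moreover have "cinner (x - P x) d = 0" using P_orth' d by blast
  moreover have e: "(x - y) - (x - P x) = d" unfolding d_def by simp
  have "cinner d d = cinner ((x - y) - (x - P x)) d" by (simp only: e)
  then have "cinner d d = cinner (x - y) d - cinner (x - P x) d" by (simp only: cinner_diff_left)
  ultimately have "cinner d d = 0" by simp
  then show "y = P x" unfolding d_def by (simp add: cinner_eq_zero_iff)
qed

lemma P_inner: "cinner (P x) x = cinner (P x) (P x)"
proof -
  have "cinner (x - P x) (P x) = 0" using P_orth' P_range by blast
  then have "cinner x (P x) = cinner (P x) (P x)" by (simp add: cinner_diff_left)
  then have "cnj (cinner x (P x)) = cnj (cinner (P x) (P x))" by simp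
  then show ?thesis using cinner_commute[of "P x" x] cinner_commute[of "P x" "P x"] by simp
qed

lemma P_norm: "norm (P x) \<le> norm x"
proof (cases "norm (P x) = 0")
  case True then show ?thesis by simp
next
  case False
  then have pos: "norm (P x) > 0" by simp
  have "(norm (P x))^2 = Re (cinner (P x) x)" by (simp add: P_inner cinner_self)
  also have "\<dots> \<le> cmod (cinner (P x) x)" by (rule complex_Re_le_cmod)
  also have "\<dots> \<le> norm (P x) * norm x" by (rule cauchy_schwarz)
  finally have "norm (P x) * norm (P x) \<le> norm x * norm (P x)" by (simp only: power2_eq_square ac_simps)
  then show ?thesis using pos by (metis mult_le_cancel_right_pos)
qed

lemma Q_eq: "cinner (Bi v) v = complex_of_real ((norm (T (Bi v)))^2)"
proof -
  have "cinner (B (Bi v)) (Bi v) = cinner (T (Bi v)) (T (Bi v))" by (rule B_inner)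
  then have "cinner v (Bi v) = complex_of_real ((norm (T (Bi v)))^2)" by (simp add: cinner_self)
  then show ?thesis using cinner_commute[of "Bi v" v] by simp
qed

lemma Tp_adj: "cinner (T (Bi w)) y = cinner w (Bi (adj T y))"
  by (simp add: adj_prop[OF cbl] Bi_sa)

lemma range_Tp: "range (T \<circ> Bi) = range T"
proof
  show "range (T \<circ> Bi) \<subseteq> range T" by auto
  show "range T \<subseteq> range (T \<circ> Bi)"
  proof
    fix y assume "y \<in> range T"
    then obtain u where "y = T u" by blast
    then have "y = (T \<circ> Bi) (B u)" by simp
    then show "y \<in> range (T \<circ> Bi)" by blast
  qed
qed

lemma aM_prop: "w \<in> range T \<Longrightarrow> cinner ((T \<circ> Bi) w) y = cinner w (P (Bi (adj T y)))"
proof -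
  assume "w \<in> range T"
  then obtain u where u: "w = T u" by blast
  define z where "z = Bi (adj T y)"
  have "cinner ((T \<circ> Bi) w) y = cinner w z" unfolding z_def by (simp add: Tp_adj)
  moreover have "cinner (z - P z) w = 0" using P_orth u by simp
  then have "cinner w (z - P z) = 0" using cinner_commute[of w "z - P z"] by simp
  then have "cinner w z = cinner w (P z)" by (simp add: cinner_diff_right)
  ultimately show ?thesis unfolding z_def by simp
qed

lemma adj_on_eq: "adj_on (range T) (T \<circ> Bi) y = P (Bi (adj T y))"
  unfolding adj_on_def
proof (rule the_equality)
  show "P (Bi (adj T y)) \<in> range T \<and> (\<forall>x\<in>range T. cinner ((T \<circ> Bi) x) y = cinner x (P (Bi (adj T y))))"
    using P_range aM_prop by blast
  fix z assume z: "z \<in> range T \<and> (\<forall>x\<in>range T. cinner ((T \<circ> Bi) x) y = cinner x z)"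
  define d where "d = z - P (Bi (adj T y))"
  have d: "d \<in> range T" unfolding d_def using range_diff P_range z by blast
  have "cinner d z = cinner d (P (Bi (adj T y)))" using z aM_prop[OF d, of y] d by metis
  then have "cinner d d = 0" unfolding d_def by (simp add: cinner_diff_right)
  then show "z = P (Bi (adj T y))" unfolding d_def by (simp add: cinner_eq_zero_iff)
qed

lemma key1: "cinner (adj T (Bi (T x)) - T (Bi (adj T x))) x
   = complex_of_real ((norm (T (Bi (T x))))^2 - (norm (T (Bi (adj T x))))^2)"
proof -
  have 1: "cinner (adj T (Bi (T x))) x = cinner (Bi (T x)) (T x)" by (rule adj_left[OF cbl])
  have 2: "cinner (T (Bi (adj T x))) x = cinner (Bi (adj T x)) (adj T x)" by (rule adj_prop[OF cbl])
  show ?thesis by (simp add: cinner_diff_left 1 2 Q_eq)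
qed

lemma sq_le_iff: "0 \<le> a \<Longrightarrow> 0 \<le> (b::real) \<Longrightarrow> (a \<le> b) = (0 \<le> b^2 - a^2)"
proof -
  assume "0 \<le> a" "0 \<le> b"
  then have "(a \<le> b) = (a^2 \<le> b^2)" using abs_le_square_iff[of a b] by simp
  then show ?thesis by simp
qed

lemma iff12: "(\<forall>x. norm (cauchy_dual T (adj T x)) \<le> norm (cauchy_dual T (T x)))
     \<longleftrightarrow> op_le (T \<circ> inv (adj T \<circ> T) \<circ> adj T) (adj T \<circ> inv (adj T \<circ> T) \<circ> T)"
proof -
  have h: "(norm (T (Bi (adj T x))) \<le> norm (T (Bi (T x))))
     = (0 \<le> (norm (T (Bi (T x))))^2 - (norm (T (Bi (adj T x))))^2)" for x
    by (rule sq_le_iff) simp_all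
  show ?thesis unfolding cauchy_dual_def invB op_le_def positive_op_def comp_apply key1 h
    by simp
qed

lemma P_fun: "T \<circ> inv (adj T \<circ> T) \<circ> adj T = proj_onto (range T)"
  by (rule ext) (simp add: invB proj_eq P_def)

lemma key2: "cinner (adj T (Bi (T x)) - proj_onto (range T) x) x
   = complex_of_real ((norm (T (Bi (T x))))^2 - (norm (P x))^2)"
proof -
  have 1: "cinner (adj T (Bi (T x))) x = cinner (Bi (T x)) (T x)" by (rule adj_left[OF cbl])
  show ?thesis by (simp add: cinner_diff_left 1 Q_eq proj_eq P_inner cinner_self)
qed

lemma key3: "cinner (adj_on (range T) (T \<circ> Bi) ((T \<circ> Bi) (T u))) (T u)
      - cinner ((T \<circ> Bi) (adj_on (range T) (T \<circ> Bi) (T u))) (T u)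
   = complex_of_real ((norm (T (Bi (T u))))^2 - (norm (P u))^2)"
proof -
  have a1: "adj_on (range T) (T \<circ> Bi) (T u) = P u" by (simp add: adj_on_eq adjT_T)
  have t1: "cinner ((T \<circ> Bi) (T u)) ((T \<circ> Bi) (T u))
      = cinner (T u) (adj_on (range T) (T \<circ> Bi) ((T \<circ> Bi) (T u)))"
    unfolding adj_on_eq by (rule aM_prop) simp
  then have t1': "cinner (adj_on (range T) (T \<circ> Bi) ((T \<circ> Bi) (T u))) (T u)
      = complex_of_real ((norm (T (Bi (T u))))^2)"
  proof -
    have "cinner (T u) (adj_on (range T) (T \<circ> Bi) ((T \<circ> Bi) (T u))) = complex_of_real ((norm (T (Bi (T u))))^2)"
      using t1 by (simp add: cinner_self)
    then show ?thesis using cinner_commute[of "adj_on (range T) (T \<circ> Bi) ((T \<circ> Bi) (T u))" "T u"] by simp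
  qed
  have t2: "cinner ((T \<circ> Bi) (P u)) (T u) = cinner (P u) (P u)"
    using aM_prop[OF P_range, of u "T u"] by (simp add: adjT_T)
  show ?thesis unfolding a1 t1' t2 by (simp add: cinner_self)
qed

lemma iff34: "op_le (proj_onto (range T)) (adj T \<circ> inv (adj T \<circ> T) \<circ> T)
     \<longleftrightarrow> hyponormal_on (range (cauchy_dual T)) (cauchy_dual T)"
proof -
  have L: "op_le (proj_onto (range T)) (adj T \<circ> inv (adj T \<circ> T) \<circ> T)
     \<longleftrightarrow> (\<forall>u. 0 \<le> (norm (T (Bi (T u))))^2 - (norm (P u))^2)"
    unfolding op_le_def positive_op_def invB by (simp add: key2)
  have R: "hyponormal_on (range (cauchy_dual T)) (cauchy_dual T)
     \<longleftrightarrow> (\<forall>u. 0 \<le> (norm (T (Bi (T u))))^2 - (norm (P u))^2)"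
  proof -
    have e: "(\<forall>x\<in>range T. \<Phi> x) \<longleftrightarrow> (\<forall>u. \<Phi> (T u))" for \<Phi> by blast
    have sub: "(T \<circ> Bi) ` range T \<subseteq> range T" by auto
    show ?thesis
      unfolding hyponormal_on_def cauchy_dual_def invB range_Tp Let_def e key3
      using sub by simp
  qed
  show ?thesis using L R by simp
qed

lemma left_inv: "left_invertible T"
  unfolding left_invertible_def
proof (intro conjI exI[of _ "Bi \<circ> adj T"])
  show "cblinear T" by (rule cbl)
  show "cblinear (Bi \<circ> adj T)" by (rule cblinear_comp[OF Bi_cbl adj_cblinear[OF cbl]])
  show "\<forall>x. (Bi \<circ> adj T) (T x) = x" using Bi_B unfolding B_def by simp
qed

end

lemma left_invertible_bb:
  assumes "left_invertible T"
  shows "\<exists>K. bb T K"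
proof -
  obtain L where T: "cblinear T" and L: "cblinear L" "\<And>x. L (T x) = x"
    using assms unfolding left_invertible_def by blast
  obtain K where K: "K > 0" "\<And>x. norm (L x) \<le> norm x * K"
    using bounded_linear.pos_bounded[OF cblinear_bl[OF L(1)]] by blast
  have "norm x \<le> K * norm (T x)" for x using K(2)[of "T x"] L(2)[of x] by (simp add: mult.commute)
  then have "bb T K" using T K(1) by unfold_locales
  then show ?thesis by blast
qed


lemma concave_cbl: "concave_op S \<Longrightarrow> cblinear S"
  unfolding concave_op_def by simp

lemma concave_ineq:
  assumes cc: "concave_op S"
  shows "(norm x)^2 - 2 * (norm (S x))^2 + (norm (S (S x)))^2 \<le> 0"
proof -
  have cbl: "cblinear S" using cc by (rule concave_cbl)
  have pos: "0 \<le> Re (cinner (0 - (x - scaleC 2 (adj S (S x)) + adj S (adj S (S (S x))))) x)"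
    using cc unfolding concave_op_def op_le_def positive_op_def by blast
  have e: "cinner (x - scaleC 2 (adj S (S x)) + adj S (adj S (S (S x)))) x
      = cinner x x - 2 * cinner (S x) (S x) + cinner (S (S x)) (S (S x))"
    by (simp add: cinner_add_left cinner_diff_left cinner_scaleC_left adj_left[OF cbl])
  have "cinner (0 - (x - scaleC 2 (adj S (S x)) + adj S (adj S (S (S x))))) x
      = - (cinner x x - 2 * cinner (S x) (S x) + cinner (S (S x)) (S (S x)))"
    by (simp only: cinner_diff_left cinner_zero_left e) simp
  then show ?thesis using pos by (simp add: cinner_self)
qed

lemma concave_expansive:
  assumes cc: "concave_op S"
  shows "norm x \<le> norm (S x)"
proof -
  define a where "a n = (norm ((S^^n) x))^2" for n
  have step: "a n - 2 * a (Suc n) + a (Suc (Suc n)) \<le> 0" for n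
    using concave_ineq[OF cc, of "(S^^n) x"] unfolding a_def by simp
  define d0 where "d0 = a 1 - a 0"
  have dd: "a (Suc n) - a n \<le> d0" for n
  proof (induction n)
    case 0 then show ?case unfolding d0_def by simp
  next
    case (Suc n) then show ?case using step[of n] by linarith
  qed
  have an: "a n \<le> a 0 + real n * d0" for n
  proof (induction n)
    case 0 then show ?case by simp
  next
    case (Suc n) then show ?case using dd[of n] by (simp add: algebra_simps)
  qed
  have "0 \<le> d0"
  proof (rule ccontr)
    assume "\<not> 0 \<le> d0"
    then have "0 < - d0" by simp
    from ex_less_of_nat_mult[OF this] obtain n where n: "a 0 < real n * (- d0)" by blast
    have "a n < 0" using an[of n] n by simp
    moreover have "0 \<le> a n" unfolding a_def by simp
    ultimately show False by simp
  qed
  then have "(norm x)^2 \<le> (norm (S x))^2" unfolding d0_def a_def by simp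
  then show ?thesis by (rule power2_le_imp_le) simp
qed

lemma ap_real:
  fixes a b r e C :: real
  assumes ha: "\<bar>a - r\<bar> \<le> e" and hb: "\<bar>b - r^2\<bar> \<le> C * e" and e0: "0 \<le> e" and e1: "e \<le> 1"
    and r0: "0 \<le> r" and C0: "0 \<le> C" and a0: "0 \<le> a" and b0: "0 \<le> b"
    and conc: "1 - 2 * a^2 + b^2 \<le> 0"
  shows "(r^2 - 1)^2 \<le> e * (2 * (2 * r + 1) + C * (2 * r^2 + C))"
proof -
  have ar: "a + r \<le> 2 * r + 1" using ha e1 by linarith
  have h1: "(a - r) * (a + r) \<le> e * (2 * r + 1)"
  proof -
    have "(a - r) * (a + r) \<le> \<bar>a - r\<bar> * (a + r)" using a0 r0 by (intro mult_right_mono) auto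
    also have "\<dots> \<le> e * (2 * r + 1)" using ha ar a0 r0 e0 by (intro mult_mono) auto
    finally show ?thesis .
  qed
  have Ce: "C * e \<le> C" using C0 e1 by (simp add: mult_left_le)
  have br: "r^2 + b \<le> 2 * r^2 + C" using hb Ce by linarith
  have h2: "(r^2 - b) * (r^2 + b) \<le> (C * e) * (2 * r^2 + C)"
  proof -
    have "(r^2 - b) * (r^2 + b) \<le> \<bar>r^2 - b\<bar> * (r^2 + b)" using b0 by (intro mult_right_mono) auto
    also have "\<dots> \<le> (C * e) * (2 * r^2 + C)" using hb br b0 C0 e0 by (intro mult_mono) (auto simp: abs_minus_commute)
    finally show ?thesis .
  qed
  have id: "(r^2 - 1)^2 = (1 - 2 * a^2 + b^2) + 2 * ((a - r) * (a + r)) + (r^2 - b) * (r^2 + b)"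
    by (simp add: algebra_simps power2_eq_square)
  have "(r^2 - 1)^2 \<le> 2 * (e * (2 * r + 1)) + (C * e) * (2 * r^2 + C)"
    using id h1 h2 conc by linarith
  also have "\<dots> = e * (2 * (2 * r + 1) + C * (2 * r^2 + C))" by (simp add: algebra_simps)
  finally show ?thesis .
qed

lemma concave_ap:
  assumes cc: "concave_op S"
  shows "ap_spectrum S \<subseteq> sphere 0 1"
proof
  fix l assume l: "l \<in> ap_spectrum S"
  have cbl: "cblinear S" using cc by (rule concave_cbl)
  note Ss = cblinear_simps[OF cbl]
  obtain K where K: "K > 0" "\<And>x. norm (S x) \<le> norm x * K"
    using bounded_linear.pos_bounded[OF cblinear_bl[OF cbl]] by blast
  define r where "r = cmod l"
  define C where "C = K + r"
  define M where "M = 2 * (2 * r + 1) + C * (2 * r^2 + C)"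
  have r0: "0 \<le> r" unfolding r_def by simp
  have C0: "0 \<le> C" unfolding C_def using K r0 by simp
  have M0: "0 < M" unfolding M_def using r0 C0 by (simp add: add_pos_nonneg)
  have bound: "(r^2 - 1)^2 \<le> e * M" if e: "0 < e" "e \<le> 1" for e
  proof -
    obtain x where x: "norm x = 1" "norm (S x - scaleC l x) < e"
      using l e(1) unfolding ap_spectrum_def by blast
    define a where "a = norm (S x)"
    define b where "b = norm (S (S x))"
    define d where "d = norm (S x - scaleC l x)"
    have nlx: "norm (scaleC l x) = r" unfolding r_def using x(1) by (simp add: norm_scaleC)
    have ha: "\<bar>a - r\<bar> \<le> e"
      using norm_triangle_ineq3[of "S x" "scaleC l x"] x(2) nlx unfolding a_def by simp
    have idt: "S (S x) - scaleC (l * l) x = S (S x - scaleC l x) + scaleC l (S x - scaleC l x)"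
      by (simp add: Ss scaleC_diff_right scaleC_scaleC)
    have "norm (S (S x) - scaleC (l * l) x) \<le> norm (S (S x - scaleC l x)) + norm (scaleC l (S x - scaleC l x))"
      unfolding idt by (rule norm_triangle_ineq)
    also have "\<dots> \<le> d * K + r * d" unfolding d_def r_def
      using K(2)[of "S x - scaleC l x"] by (simp add: norm_scaleC)
    also have "\<dots> = C * d" unfolding C_def by (simp add: algebra_simps)
    also have "\<dots> \<le> C * e" using C0 x(2) unfolding d_def by (simp add: mult_left_mono)
    finally have n2: "norm (S (S x) - scaleC (l * l) x) \<le> C * e" .
    have nllx: "norm (scaleC (l * l) x) = r^2" unfolding r_def using x(1)
      by (simp add: norm_scaleC norm_mult power2_eq_square)
    have hb: "\<bar>b - r^2\<bar> \<le> C * e"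
      using norm_triangle_ineq3[of "S (S x)" "scaleC (l * l) x"] n2 nllx unfolding b_def by simp
    have conc: "1 - 2 * a^2 + b^2 \<le> 0" using concave_ineq[OF cc, of x] x(1) unfolding a_def b_def by simp
    show ?thesis unfolding M_def
      by (rule ap_real[OF ha hb _ e(2) r0 C0 _ _ conc]) (use e in \<open>auto simp: a_def b_def\<close>)
  qed
  have "(r^2 - 1)^2 \<le> 0"
  proof (rule ccontr)
    assume "\<not> (r^2 - 1)^2 \<le> 0"
    then have q: "0 < (r^2 - 1)^2" by simp
    define e where "e = min 1 ((r^2 - 1)^2 / (2 * M))"
    have e0: "0 < e" unfolding e_def using q M0 by simp
    have e1: "e \<le> 1" unfolding e_def by simp
    have "e * M \<le> ((r^2 - 1)^2 / (2 * M)) * M" unfolding e_def using M0 by (intro mult_right_mono) auto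
    also have "\<dots> = (r^2 - 1)^2 / 2" using M0 by simp
    finally have h: "e * M \<le> (r^2 - 1)^2 / 2" .
    have "0 < e * M" using e0 M0 by simp
    then have "e * M < (r^2 - 1)^2" using h by linarith
    then show False using bound[OF e0 e1] by simp
  qed
  then have "r^2 = 1" by simp
  then have "r = 1" using r0 by (simp add: power2_eq_1_iff)
  then show "l \<in> sphere 0 1" unfolding r_def by simp
qed

lemma concave_weakly:
  assumes cc: "concave_op S"
  shows "weakly_concave S"
proof -
  have cbl: "cblinear S" using cc by (rule concave_cbl)
  have exp: "\<forall>x. norm x \<le> norm (S x)" using concave_expansive[OF cc] by blast
  interpret bb S 1 using cbl exp by unfold_locales simp_all
  have li: "left_invertible S" by (rule left_inv)
  have low: "(norm x)^2 \<le> (norm (S (Bi (S x))))^2" for x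
  proof -
    define w where "w = Bi (S x)"
    have c: "cinner (S w) (S (S x)) = complex_of_real ((norm (S x))^2)"
      unfolding w_def by (simp add: B_inner[symmetric] cinner_self)
    have "0 \<le> (norm (S w - S (S x)))^2" by simp
    also have "\<dots> = (norm (S w))^2 + (norm (S (S x)))^2 - 2 * (norm (S x))^2"
      by (simp add: norm_diff_sq c)
    finally show ?thesis using concave_ineq[OF cc, of x] unfolding w_def by linarith
  qed
  have iii: "op_le (proj_onto (range S)) (adj S \<circ> inv (adj S \<circ> S) \<circ> S)"
  proof -
    have "0 \<le> (norm (S (Bi (S x))))^2 - (norm (P x))^2" for x
    proof -
      have "(norm (P x))^2 \<le> (norm x)^2" using P_norm[of x] by (simp add: power_mono)
      then show ?thesis using low[of x] by linarith
    qed
    then show ?thesis unfolding op_le_def positive_op_def invB comp_apply key2 by simp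
  qed
  have i: "\<forall>x. norm (cauchy_dual S (adj S x)) \<le> norm (cauchy_dual S (S x))"
    using iii iff12 P_fun by simp
  show ?thesis unfolding weakly_concave_def using li concave_ap[OF cc] exp i by blast
qed

theorem proposition2p3:
  fixes T :: "'a::chilbert \<Rightarrow> 'a"
  assumes "left_invertible T"
  shows "((\<forall>x. norm (cauchy_dual T (adj T x)) \<le> norm (cauchy_dual T (T x)))
            \<longleftrightarrow> op_le (T \<circ> inv (adj T \<circ> T) \<circ> adj T) (adj T \<circ> inv (adj T \<circ> T) \<circ> T))
       \<and> (op_le (T \<circ> inv (adj T \<circ> T) \<circ> adj T) (adj T \<circ> inv (adj T \<circ> T) \<circ> T)
            \<longleftrightarrow> op_le (proj_onto (range T)) (adj T \<circ> inv (adj T \<circ> T) \<circ> T))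
       \<and> (op_le (proj_onto (range T)) (adj T \<circ> inv (adj T \<circ> T) \<circ> T)
            \<longleftrightarrow> hyponormal_on (range (cauchy_dual T)) (cauchy_dual T))
       \<and> (\<forall>S::'a \<Rightarrow> 'a. concave_op S \<longrightarrow> weakly_concave S)"
proof -
  obtain K where "bb T K" using left_invertible_bb[OF assms] by blast
  then interpret bb T K .
  show ?thesis
  proof (intro conjI)
    show "(\<forall>x. norm (cauchy_dual T (adj T x)) \<le> norm (cauchy_dual T (T x)))
            \<longleftrightarrow> op_le (T \<circ> inv (adj T \<circ> T) \<circ> adj T) (adj T \<circ> inv (adj T \<circ> T) \<circ> T)"
      by (rule iff12)
    show "op_le (T \<circ> inv (adj T \<circ> T) \<circ> adj T) (adj T \<circ> inv (adj T \<circ> T) \<circ> T)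
            \<longleftrightarrow> op_le (proj_onto (range T)) (adj T \<circ> inv (adj T \<circ> T) \<circ> T)"
      by (simp only: P_fun)
    show "op_le (proj_onto (range T)) (adj T \<circ> inv (adj T \<circ> T) \<circ> T)
            \<longleftrightarrow> hyponormal_on (range (cauchy_dual T)) (cauchy_dual T)"
      by (rule iff34)
    show "\<forall>S::'a \<Rightarrow> 'a. concave_op S \<longrightarrow> weakly_concave S" using concave_weakly by blast
  qed
qed

end
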